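(* Let $p$ be a prime. There is no symmetric triple of the form $\{p, p+2, p+6\}$. Moreover, if $\{p, p+4, p+6\}$ is a symmetric triple, then $p \equiv 1 \pmod{12}$.
   Context: Two distinct primes $p$ and $q$ form a symmetric pair if $\gcd(p-1, q-1) = |p-q|$. A symmetric triple is a set of three primes such that any two of them form a symmetric pair. *)

theory Defs
  imports "HOL-Computational_Algebra.Primes"
begin

definition symmetric_pair :: "nat \<Rightarrow> nat \<Rightarrow> bool" where
  "symmetric_pair p q \<longleftrightarrow> prime p \<and> prime q \<and> p \<noteq> q \<and>
     int (gcd (p - 1) (q - 1)) = \<bar>int p - int q\<bar>"

definition symmetric_triple :: "nat set \<Rightarrow> bool" where
  "symmetric_triple S \<longleftrightarrow> card S = 3 \<and>
     (\<forall>p\<in>S. \<forall>q\<in>S. p \<noteq> q \<longrightarrow> symmetric_pair p q)"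

end

theory Submission
  imports Defs
begin

lemma pair_dvd:
  assumes "symmetric_pair p q" "p < q"
  shows "(q - p) dvd (p - 1)"
proof -
  have "int (gcd (p - 1) (q - 1)) = int (q - p)" using assms unfolding symmetric_pair_def by auto
  hence "gcd (p - 1) (q - 1) = q - p" by linarith
  thus ?thesis by (metis gcd_dvd1)
qed

theorem lemma1:
  fixes p :: nat
  assumes "prime p"
  shows "\<not> symmetric_triple {p, p + 2, p + 6}
    \<and> (symmetric_triple {p, p + 4, p + 6} \<longrightarrow> p mod 12 = 1)"
proof
  have p2: "p \<ge> 2" using assms prime_ge_2_nat by blast
  show "\<not> symmetric_triple {p, p + 2, p + 6}"
  proof
    assume T: "symmetric_triple {p, p + 2, p + 6}"
    have a: "symmetric_pair (p+2) (p+6)" "symmetric_pair p (p+6)"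
      using T unfolding symmetric_triple_def by auto
    have "(4::nat) dvd (p + 1)" using pair_dvd[OF a(1)] by simp
    have "(6::nat) dvd (p - 1)" using pair_dvd[OF a(2)] by simp
    hence "(3::nat) dvd (p + 2)" using p2 by presburger
    moreover have "prime (p+2)" using a(1) unfolding symmetric_pair_def by auto
    ultimately have "p + 2 = 3" by (metis prime_nat_iff numeral_eq_one_iff semiring_norm(86))
    thus False using p2 by simp
  qed
  show "symmetric_triple {p, p + 4, p + 6} \<longrightarrow> p mod 12 = 1"
  proof
    assume T: "symmetric_triple {p, p + 4, p + 6}"
    have a: "symmetric_pair p (p+4)" "symmetric_pair p (p+6)"
      using T unfolding symmetric_triple_def by auto
    have "(4::nat) dvd (p - 1)" using pair_dvd[OF a(1)] by simp
    moreover have "(6::nat) dvd (p - 1)" using pair_dvd[OF a(2)] by simp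
    ultimately show "p mod 12 = 1" using p2 by presburger
  qed
qed

end
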